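(* Let $\beta>1$, $n\in\mathbb{N}$, $C_\beta=2+\frac{2(\beta-1)^2}{2\beta-1}$ and $$h(t,\tau)=2\big(nt-\tau|\tau|^{\beta-1}\big)^2-C_\beta(t-\tau)\big(n^2t-\tau|\tau|^{2(\beta-1)}\big).$$ Then $h(t,\tau)\le0$ for all real $t,\tau$ with $|t|>n^{1/(\beta-1)}$ and $|\tau|\le n^{1/(\beta-1)}$. *)

theory Defs
  imports Complex_Main
begin

definition C_beta :: "real \<Rightarrow> real" where
  "C_beta \<beta> = 2 + 2 * (\<beta> - 1)^2 / (2 * \<beta> - 1)"

definition h_fun :: "real \<Rightarrow> nat \<Rightarrow> real \<Rightarrow> real \<Rightarrow> real" where
  "h_fun \<beta> n t \<tau> =
     2 * (real n * t - \<tau> * \<bar>\<tau>\<bar> powr (\<beta> - 1))^2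
     - C_beta \<beta> * (t - \<tau>) * ((real n)^2 * t - \<tau> * \<bar>\<tau>\<bar> powr (2 * (\<beta> - 1)))"

end

theory Submission
  imports Defs
begin

lemma L1:
  fixes p w :: real assumes p: "p > 0" and w: "w \<ge> 0"
  shows "(p+1) * sinh (p*w) \<le> p * sinh ((p+1)*w)"
proof -
  let ?H = "\<lambda>x. p * sinh ((p+1)*x) - (p+1) * sinh (p*x)"
  have "?H 0 \<le> ?H w"
  proof (rule DERIV_nonneg_imp_nondecreasing[OF w])
    fix x :: real assume x: "0 \<le> x" "x \<le> w"
    have "cosh (p*x) \<le> cosh ((p+1)*x)"
      using x p by (subst cosh_real_nonneg_le_iff) (auto simp: algebra_simps)
    then have "0 \<le> p*(p+1)*(cosh ((p+1)*x) - cosh (p*x))" using p by simp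
    moreover have "DERIV ?H x :> p*(p+1)*(cosh ((p+1)*x) - cosh (p*x))"
      by (auto intro!: derivative_eq_intros simp: algebra_simps)
    ultimately show "\<exists>y. DERIV ?H x :> y \<and> y \<ge> 0" by blast
  qed
  then show ?thesis by simp
qed

lemma L2:
  fixes p w :: real assumes p: "p > 0" and w: "w \<ge> 0"
  shows "(p+1)^2 * cosh (p*w) \<le> p^2 * cosh ((p+1)*w) + (2*p+1)"
proof -
  let ?G = "\<lambda>x. p^2 * cosh ((p+1)*x) + (2*p+1) - (p+1)^2 * cosh (p*x)"
  have "?G 0 \<le> ?G w"
  proof (rule DERIV_nonneg_imp_nondecreasing[OF w])
    fix x :: real assume x: "0 \<le> x" "x \<le> w"
    have "0 \<le> p*(p+1)*(p * sinh ((p+1)*x) - (p+1) * sinh (p*x))"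
      using L1[OF p x(1)] p by simp
    moreover have "DERIV ?G x :> p*(p+1)*(p * sinh ((p+1)*x) - (p+1) * sinh (p*x))"
      by (auto intro!: derivative_eq_intros simp: algebra_simps power2_eq_square)
    ultimately show "\<exists>y. DERIV ?G x :> y \<and> y \<ge> 0" by blast
  qed
  then show ?thesis by (simp add: power2_eq_square algebra_simps)
qed

lemma Key:
  fixes p y :: real assumes p: "p > 0" and y: "0 < y" "y \<le> 1"
  shows "(2*p+1) * y * (1 - y powr p)^2 \<le> p^2 * (1 - y) * (1 - y * (y powr p)^2)"
proof -
  define w where "w = - ln y"
  have w: "w \<ge> 0" using y by (simp add: w_def)
  define E where "E = exp w"
  define F where "F = exp (p*w)"
  have E: "E > 0" and F: "F > 0" by (auto simp: E_def F_def)
  have yE: "y = 1 / E" using y by (simp add: E_def w_def exp_minus field_simps)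
  have yF: "y powr p = 1 / F" using y
    by (simp add: F_def w_def powr_def exp_minus field_simps)
  have ch1: "cosh ((p+1)*w) = (E*F + 1/(E*F))/2"
    proof -
    have 1: "exp ((p+1)*w) = E*F" by (simp add: E_def F_def exp_add[symmetric] algebra_simps)
    have 2: "exp (-((p+1)*w)) = 1/(E*F)" by (simp only: exp_minus 1 inverse_eq_divide)
    show ?thesis by (simp only: cosh_field_def 1 2)
  qed
  have ch2: "cosh (p*w) = (F + 1/F)/2"
    unfolding cosh_field_def F_def by (simp only: exp_minus inverse_eq_divide)
  have c1: "2 * E * F * cosh ((p+1)*w) = E^2*F^2 + 1"
    unfolding ch1 using E F by (simp add: field_simps power2_eq_square)
  have c2: "2 * E * F * cosh (p*w) = E*F^2 + E"
    unfolding ch2 using E F by (simp add: field_simps power2_eq_square)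
  have G: "(p+1)^2 * cosh (p*w) \<le> p^2 * cosh ((p+1)*w) + (2*p+1)" by (rule L2[OF p w])
  have "2*E*F*((p+1)^2 * cosh (p*w)) \<le> 2*E*F*(p^2 * cosh ((p+1)*w) + (2*p+1))"
    using G E F by simp
  then have "(p+1)^2 * (E*F^2 + E) \<le> p^2 * (E^2*F^2 + 1) + 2*E*F*(2*p+1)"
  proof -
    have l: "2*E*F*((p+1)^2 * cosh (p*w)) = (p+1)^2 * (E*F^2 + E)"
      by (subst c2[symmetric]) (simp only: mult_ac)
    have r: "2*E*F*(p^2 * cosh ((p+1)*w) + (2*p+1)) = p^2 * (E^2*F^2 + 1) + 2*E*F*(2*p+1)"
      by (subst c1[symmetric]) (simp only: distrib_left mult_ac)
    show ?thesis using l r \<open>2*E*F*((p+1)^2 * cosh (p*w)) \<le> 2*E*F*(p^2 * cosh ((p+1)*w) + (2*p+1))\<close> by linarith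
  qed
  then have M: "(2*p+1)*E*(F-1)^2 \<le> p^2*(E-1)*(E*F^2-1)"
    by (simp add: algebra_simps power2_eq_square)
  have e1: "1 - y powr p = (F-1)/F" using F by (simp add: yF field_simps)
  have e2: "1 - y = (E-1)/E" using E by (simp add: yE field_simps)
  have e3: "1 - y * (y powr p)^2 = (E*F^2-1)/(E*F^2)"
    unfolding yF using E F by (subst yE) (simp add: field_simps power2_eq_square)
  have "(2*p+1) * y * (1 - y powr p)^2 = (2*p+1)*E*(F-1)^2 / (E^2*F^2)"
    unfolding e1 using E F by (subst yE) (simp add: field_simps power2_eq_square)
  also have "\<dots> \<le> p^2*(E-1)*(E*F^2-1) / (E^2*F^2)"
    using M E F by (simp add: divide_right_mono)
  also have "\<dots> = p^2 * (1 - y) * (1 - y * (y powr p)^2)"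
    unfolding e2 e3 using E F by (simp add: field_simps power2_eq_square)
  finally show ?thesis .
qed


theorem lemma4p1:
  fixes \<beta> t \<tau> :: real and n :: nat
  assumes "\<beta> > 1"
    and "\<bar>t\<bar> > real n powr (1 / (\<beta> - 1))"
    and "\<bar>\<tau>\<bar> \<le> real n powr (1 / (\<beta> - 1))"
  shows "h_fun \<beta> n t \<tau> \<le> 0"
proof -
  define p where "p = \<beta> - 1"
  have p: "p > 0" using assms(1) by (simp add: p_def)
  define N where "N = real n powr (1/p)"
  define D where "D = 2 * p^2 / (2*p+1)"
  have D: "D > 0" using p by (simp add: D_def)
  have CD: "C_beta \<beta> = 2 + D" by (simp add: C_beta_def D_def p_def)
  define \<sigma> where "\<sigma> = \<bar>\<tau>\<bar>"
  define T where "T = \<bar>t\<bar>"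
  define a where "a = \<sigma> powr p"
  have a0: "a \<ge> 0" by (simp add: a_def)
  define K where "K = 2*(real n - a)^2 + D*((real n)^2 + a^2)"
  have K0: "K \<ge> 0" using D by (simp add: K_def)
  have a2: "\<bar>\<tau>\<bar> powr (2 * (\<beta> - 1)) = a^2"
    by (simp add: a_def \<sigma>_def p_def power2_eq_square flip: powr_add)
  have hexp: "h_fun \<beta> n t \<tau> = - D * (real n)^2 * t^2 + t*\<tau>*K - D*\<tau>^2*a^2"
    unfolding h_fun_def CD a2 by (simp add: a_def \<sigma>_def p_def K_def power2_eq_square algebra_simps)
  have tt: "t*\<tau>*K \<le> T*\<sigma>*K"
    using K0 by (intro mult_right_mono) (auto simp: T_def \<sigma>_def abs_mult[symmetric])
  have hle: "h_fun \<beta> n t \<tau> \<le> - (D * (real n)^2 * T^2 - K*\<sigma>*T + D*\<sigma>^2*a^2)"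
    unfolding hexp using tt by (simp add: T_def \<sigma>_def algebra_simps)
  show ?thesis
  proof (cases "\<sigma> = 0")
    case True
    have "D * (real n)^2 * T^2 \<ge> 0" using D by simp
    then show ?thesis using hle True by (simp add: a_def)
  next
    case False
    then have s0: "\<sigma> > 0" by (simp add: \<sigma>_def)
    have sN: "\<sigma> \<le> N" using assms(3) by (simp add: \<sigma>_def N_def p_def)
    have TN: "T > N" using assms(2) by (simp add: T_def N_def p_def)
    have N0: "N > 0" using s0 sN by linarith
    have n0: "n > 0" using N0 by (auto simp: N_def)
    have nN: "N powr p = real n" using p n0 by (simp add: N_def powr_powr)
    define y where "y = \<sigma> / N"
    have y0: "y > 0" and y1: "y \<le> 1" using s0 N0 sN by (auto simp: y_def)
    define b where "b = y powr p"
    have b0: "b \<ge> 0" and b1: "b \<le> 1" using y0 y1 p by (auto simp: b_def intro!: powr_le1)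
    have sy: "\<sigma> = y * N" using N0 by (simp add: y_def)
    have ab: "a = b * real n"
      unfolding a_def b_def sy using y0 N0 by (simp add: powr_mult nN)
    have key: "(2*p+1) * y * (1 - b)^2 \<le> p^2 * (1 - y) * (1 - y * b^2)"
      unfolding b_def by (rule Key[OF p y0 y1])
    have "(2*p+1) * (2 * y * (1 - b)^2) \<le> (2*p+1) * (D * (1 - y) * (1 - y*b^2))"
      using key p by (simp add: D_def)
    then have k2: "2 * y * (1 - b)^2 \<le> D * (1 - y) * (1 - y*b^2)"
      using p by (simp add: mult_le_cancel_left)
    define B where "B = D - y * (2*(1-b)^2 + D*(1+b^2)) + D*y^2*b^2"
    have B0: "B \<ge> 0" using k2 by (simp add: B_def algebra_simps power2_eq_square)
    define Q where "Q = (\<lambda>X. D * (real n)^2 * X^2 - K*\<sigma>*X + D*\<sigma>^2*a^2)"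
    have QN: "Q N = (real n)^2 * N^2 * B"
      by (simp add: Q_def B_def K_def sy ab power2_eq_square algebra_simps)
    have QN0: "Q N \<ge> 0" using B0 QN by simp
    have san: "\<sigma> * a \<le> N * real n"
    proof -
      have "b * real n \<le> real n" using b1 by (metis mult_left_le_one_le of_nat_0_le_iff b0)
      then show ?thesis unfolding ab using sN s0 b0 N0 by (intro mult_mono) auto
    qed
    have "(\<sigma> * a)^2 \<le> (N * real n)^2"
      using san s0 a0 by (intro power_mono) auto
    then have "D * (\<sigma> * a)^2 \<le> D * (N * real n)^2"
      using D by (intro mult_left_mono) auto
    then have "D*\<sigma>^2*a^2 \<le> D * (real n)^2 * N^2"
      by (simp add: power_mult_distrib algebra_simps)
    then have "K*\<sigma>*N \<le> 2 * D * (real n)^2 * N^2"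
      using QN0 unfolding Q_def by linarith
    then have der: "K*\<sigma> \<le> 2 * D * (real n)^2 * N"
      using N0 by (simp add: power2_eq_square)
    have QT: "Q T = Q N + (T - N) * (2 * D * (real n)^2 * N - K*\<sigma>) + D * (real n)^2 * (T-N)^2"
      by (simp add: Q_def power2_eq_square algebra_simps)
    have "(T - N) * (2 * D * (real n)^2 * N - K*\<sigma>) \<ge> 0"
      using TN der by simp
    moreover have "D * (real n)^2 * (T-N)^2 \<ge> 0" using D by simp
    ultimately have "Q T \<ge> 0" using QT QN0 by linarith
    then show ?thesis using hle by (simp add: Q_def)
  qed
qed

end
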